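(* Let $(\mathcal{C},\mathcal{B},Q,2)$ be a 2-seat STV election, counted by the procedure described in the context, with reported winners $w_1\neq w_2$. Suppose the procedure FindAuditableAssertions described in the context, run on recorded ballot data and an arbitrary real-valued cost function, does not abort and returns a set $\mathcal{A}$ of assertions. If every assertion in $\mathcal{A}$ holds for the ballots $\mathcal{B}$, then $\mathcal{A}$ rules out every alternate election result: no $2$-element set $\{c_1,c_2\}\subseteq\mathcal{C}$ with $\{c_1,c_2\}\neq\{w_1,w_2\}$ is the set of seated candidates.
   Context: An STV election is a tuple $(\mathcal{C},\mathcal{B},Q,S)$ where $\mathcal{C}$ is a finite set of candidates, $\mathcal{B}$ is a multiset of ballots (each ballot is a finite sequence of distinct candidates, in order of preference, most preferred first, not necessarily containing all candidates), $S$ is the number of seats, and $Q=\lfloor |\mathcal{B}|/(S+1)\rfloor+1$ is the quota. For a sequence $\pi$, $\mathrm{first}(\pi)$ is its first element, and for a set $X$ of candidates, $\sigma_X(\pi)$ is the subsequence of $\pi$ consisting of the elements of $X$, in order. Counting: every ballot starts with value $1$ in the pile of its first-ranked candidate; a candidate's tally is the total value of the ballots in its pile; a candidate is eligible if neither eliminated nor seated. In each round every eligible candidate with tally at least $Q$ is seated (gets a quota) and every ballot in its pile is given the transfer value $(V_c-Q)/|\mathcal{B}_c|$ (unweighted Gregory method; $V_c$ is the total value, $|\mathcal{B}_c|$ the number of ballots in the pile) and moved to the next-ranked eligible candidate on the ballot (or exhausted). If no candidate reaches a quota, the eligible candidate with smallest tally is eliminated and its ballots move at their current value to their next-ranked eligible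 candidate (or are exhausted). Counting stops when all $S$ seats are filled or the number of eligible candidates equals the number of unfilled seats, in which case all remaining eligible candidates are seated. Quantities (counts with multiplicity, computed from a given ballot multiset): $L_{\mathrm{basic}}(c)=|\{\beta:\mathrm{first}(\beta)=c\}|$; $U_{\mathrm{comp}}(c,c')=|\{\beta:\mathrm{first}(\sigma_{\{c,c'\}}(\beta))=c\}|$; $L_{\mathrm{elim}}(w,O)=|\{\beta:\mathrm{first}(\sigma_{\mathcal{C}\setminus O}(\beta))=w\}|$; for $W\subseteq\mathcal{C}$, distinct $c,b\notin W$, reals $\overline{\tau}=(\overline{\tau}_v)_{v\in W}$ and $G\subseteq\mathcal{C}$, $U_{\mathrm{complex}}(c,b,W,\overline{\tau},G)=\sum_\beta u(\beta)$ with $u(\beta)$ given by the first applicable case: $0$ if some $g\in G\setminus W$ has $\mathrm{first}(\sigma_{\{g,c\}}(\beta))=g$; $0$ if $c$ does not occur in $\beta$; $0$ if $\mathrm{first}(\sigma_{\{b,c\}}(\beta))=b$; $\max\{\overline{\tau}_v:v\in W, v\text{ precedes }c\text{ in }\beta\}$ if $\mathrm{first}(\beta)\in W$; $1$ otherwise. Assertions: $\mathsf{AG}(x,y)$ means $L_{\mathrm{basic}}(x)>U_{\mathrm{comp}}(y,x)$; $\mathsf{NL}(w,l,W,\overline{\tau},G,O)$ means $L_{\mathrm{elim}}(w,O)>U_{\mathrm{complex}}(l,w,W,\overline{\tau},G)$. An assertion "holds for $\mathcal{B}$" if its inequality is true when the quantities are computed from $\mathcal{B}$. Procedure (quantities inside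 it are computed from the recorded ballot data, which may differ from $\mathcal{B}$): NonWinners computes $AG_{\mathrm{rec}}=\{(x,y): x\neq y,\ \mathsf{AG}(x,y)\text{ holds for the recorded data}\}$, the set $NW$ of candidates $c$ with at least two distinct $x$ such that $(x,c)\in AG_{\mathrm{rec}}$, and for each $c\in NW$ two assertions $\mathsf{AG}(x_1,c),\mathsf{AG}(x_2,c)$ with $x_1\neq x_2$ and $(x_1,c),(x_2,c)\in AG_{\mathrm{rec}}$ (chosen to minimise the cost); these form the initial $\mathcal{A}$. Then for every unordered pair $\{c_1,c_2\}$ of distinct candidates with $\{c_1,c_2\}\neq\{w_1,w_2\}$ and $\{c_1,c_2\}\cap NW=\emptyset$, the procedure considers all $o\in\mathcal{C}\setminus\{c_1,c_2\}$ and both orderings $(x,y)\in\{(c_1,c_2),(c_2,c_1)\}$, with $O_o=\{o':(o,o')\in AG_{\mathrm{rec}}\}$ and $G_y=\{g:(g,y)\in AG_{\mathrm{rec}}\}$, and keeps those for which $\mathsf{NL}(o,y,\{x\},\overline{\tau},G_y,O_o\setminus\{x\})$ with $\overline{\tau}_x=2/3$ holds for the recorded data; if there are none it aborts, otherwise it picks one such choice (of minimal cost) and adds to $\mathcal{A}$ the assertions $\mathsf{NL}(o,y,\{x\},\overline{\tau},G_y,O_o\setminus\{x\})$ (with $\overline{\tau}_x=2/3$), $\mathsf{AG}(o,o')$ for all $o'\in O_o$, and $\mathsf{AG}(g,y)$ for all $g\in G_y$. Finally it returns $\mathcal{A}$. *)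

theory Defs
  imports Complex_Main "HOL-Library.Multiset"
begin

text \<open>A ballot is a finite list of distinct candidates (most preferred first).
  A multiset of ballots models the ballot multiset.\<close>

definition valid_ballots :: "'c set \<Rightarrow> 'c list multiset \<Rightarrow> bool" where
  "valid_ballots C B \<longleftrightarrow> (\<forall>\<beta>\<in>#B. distinct \<beta> \<and> set \<beta> \<subseteq> C)"

definition first :: "'c list \<Rightarrow> 'c option" where
  "first \<beta> = (case \<beta> of [] \<Rightarrow> None | x # _ \<Rightarrow> Some x)"

definition sigma :: "'c set \<Rightarrow> 'c list \<Rightarrow> 'c list" where
  "sigma X \<beta> = filter (\<lambda>x. x \<in> X) \<beta>"

definition precedes :: "'c \<Rightarrow> 'c \<Rightarrow> 'c list \<Rightarrow> bool" where
  "precedes v c \<beta> \<longleftrightarrow> (\<exists>i j. i < j \<and> j < length \<beta> \<and> \<beta> ! i = v \<and> \<beta> ! j = c)"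

definition quota :: "'c list multiset \<Rightarrow> nat \<Rightarrow> nat" where
  "quota B S = size B div (S + 1) + 1"

text \<open>A counting state: seated candidates, eliminated candidates, and for each
  ballot (with multiplicity) its current value and the pile it is in
  (None = exhausted).\<close>
datatype 'c stv_state =
  St (seated: "'c set") (elim: "'c set") (piles: "('c list \<times> real \<times> 'c option) multiset")

definition eligible :: "'c set \<Rightarrow> 'c stv_state \<Rightarrow> 'c set" where
  "eligible C s = C - seated s - elim s"

definition tally :: "('c list \<times> real \<times> 'c option) multiset \<Rightarrow> 'c \<Rightarrow> real" where
  "tally M c = sum_mset (image_mset (\<lambda>(\<beta>, v, p). v) (filter_mset (\<lambda>(\<beta>, v, p). p = Some c) M))"

definition pile_size :: "('c list \<times> real \<times> 'c option) multiset \<Rightarrow> 'c \<Rightarrow> nat" where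
  "pile_size M c = size (filter_mset (\<lambda>(\<beta>, v, p). p = Some c) M)"

definition next_pref :: "'c set \<Rightarrow> 'c list \<Rightarrow> 'c \<Rightarrow> 'c option" where
  "next_pref E \<beta> c = find (\<lambda>x. x \<in> E) (tl (dropWhile (\<lambda>x. x \<noteq> c) \<beta>))"

definition initial_state :: "'c list multiset \<Rightarrow> 'c stv_state" where
  "initial_state B = St {} {} (image_mset (\<lambda>\<beta>. (\<beta>, 1, first \<beta>)) B)"

definition stopped :: "'c set \<Rightarrow> nat \<Rightarrow> 'c stv_state \<Rightarrow> bool" where
  "stopped C S s \<longleftrightarrow> S \<le> card (seated s) \<or> card (eligible C s) = S - card (seated s)"

text \<open>Seating round: every candidate of X (the eligible candidates with tally
  at least the quota) is seated; the ballots in its pile get the unweighted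
  Gregory transfer value and move to the next-ranked eligible candidate.\<close>
definition seat_transfer ::
  "'c set \<Rightarrow> 'c set \<Rightarrow> real \<Rightarrow> ('c list \<times> real \<times> 'c option) multiset
    \<Rightarrow> ('c list \<times> real \<times> 'c option) multiset" where
  "seat_transfer E' X Q M = image_mset (\<lambda>(\<beta>, v, p). case p of
       Some c \<Rightarrow> if c \<in> X then (\<beta>, (tally M c - Q) / real (pile_size M c), next_pref E' \<beta> c)
                 else (\<beta>, v, p)
     | None \<Rightarrow> (\<beta>, v, p)) M"

definition elim_transfer ::
  "'c set \<Rightarrow> 'c \<Rightarrow> ('c list \<times> real \<times> 'c option) multiset
    \<Rightarrow> ('c list \<times> real \<times> 'c option) multiset" where
  "elim_transfer E' e M = image_mset (\<lambda>(\<beta>, v, p).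
       if p = Some e then (\<beta>, v, next_pref E' \<beta> e) else (\<beta>, v, p)) M"

text \<open>One round of counting (ties for elimination are broken arbitrarily).\<close>
inductive stv_step :: "'c set \<Rightarrow> real \<Rightarrow> nat \<Rightarrow> 'c stv_state \<Rightarrow> 'c stv_state \<Rightarrow> bool"
  for C Q S where
  seat: "\<not> stopped C S s \<Longrightarrow> X = {c \<in> eligible C s. tally (piles s) c \<ge> Q} \<Longrightarrow> X \<noteq> {} \<Longrightarrow>
     stv_step C Q S s (St (seated s \<union> X) (elim s) (seat_transfer (eligible C s - X) X Q (piles s)))"
| elim: "\<not> stopped C S s \<Longrightarrow> \<forall>c \<in> eligible C s. tally (piles s) c < Q \<Longrightarrow>
     e \<in> eligible C s \<Longrightarrow> \<forall>c \<in> eligible C s. tally (piles s) e \<le> tally (piles s) c \<Longrightarrow>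
     stv_step C Q S s (St (seated s) (elim s \<union> {e}) (elim_transfer (eligible C s - {e}) e (piles s)))"

definition stv_result :: "'c set \<Rightarrow> 'c list multiset \<Rightarrow> nat \<Rightarrow> 'c set \<Rightarrow> bool" where
  "stv_result C B S W \<longleftrightarrow> (\<exists>s. (stv_step C (real (quota B S)) S)\<^sup>*\<^sup>* (initial_state B) s \<and>
      stopped C S s \<and>
      W = (if S \<le> card (seated s) then seated s else seated s \<union> eligible C s))"

definition L_basic :: "'c list multiset \<Rightarrow> 'c \<Rightarrow> nat" where
  "L_basic B c = size (filter_mset (\<lambda>\<beta>. first \<beta> = Some c) B)"

definition U_comp :: "'c list multiset \<Rightarrow> 'c \<Rightarrow> 'c \<Rightarrow> nat" where
  "U_comp B c c' = size (filter_mset (\<lambda>\<beta>. first (sigma {c, c'} \<beta>) = Some c) B)"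

definition L_elim :: "'c set \<Rightarrow> 'c list multiset \<Rightarrow> 'c \<Rightarrow> 'c set \<Rightarrow> nat" where
  "L_elim C B w Os = size (filter_mset (\<lambda>\<beta>. first (sigma (C - Os) \<beta>) = Some w) B)"

definition u_complex :: "'c \<Rightarrow> 'c \<Rightarrow> 'c set \<Rightarrow> ('c \<Rightarrow> real) \<Rightarrow> 'c set \<Rightarrow> 'c list \<Rightarrow> real" where
  "u_complex c b W \<tau> G \<beta> =
     (if \<exists>g \<in> G - W. first (sigma {g, c} \<beta>) = Some g then 0
      else if c \<notin> set \<beta> then 0
      else if first (sigma {b, c} \<beta>) = Some b then 0
      else if (\<exists>v \<in> W. first \<beta> = Some v) then Max (\<tau> ` {v \<in> W. precedes v c \<beta>})
      else 1)"

definition U_complex :: "'c list multiset \<Rightarrow> 'c \<Rightarrow> 'c \<Rightarrow> 'c set \<Rightarrow> ('c \<Rightarrow> real) \<Rightarrow> 'c set \<Rightarrow> real" where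
  "U_complex B c b W \<tau> G = sum_mset (image_mset (u_complex c b W \<tau> G) B)"

datatype 'c assertion =
    AG 'c 'c
  | NL 'c 'c "'c set" "'c \<Rightarrow> real" "'c set" "'c set"

fun holds :: "'c set \<Rightarrow> 'c list multiset \<Rightarrow> 'c assertion \<Rightarrow> bool" where
  "holds C B (AG x y) \<longleftrightarrow> L_basic B x > U_comp B y x"
| "holds C B (NL w l W \<tau> G Os) \<longleftrightarrow> real (L_elim C B w Os) > U_complex B l w W \<tau> G"

definition AG_rec :: "'c set \<Rightarrow> 'c list multiset \<Rightarrow> ('c \<times> 'c) set" where
  "AG_rec C R = {(x, y). x \<in> C \<and> y \<in> C \<and> x \<noteq> y \<and> holds C R (AG x y)}"

definition NW :: "'c set \<Rightarrow> 'c list multiset \<Rightarrow> 'c set" where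
  "NW C R = {c \<in> C. \<exists>x1 x2. x1 \<noteq> x2 \<and> (x1, c) \<in> AG_rec C R \<and> (x2, c) \<in> AG_rec C R}"

definition NW_choices :: "'c set \<Rightarrow> 'c list multiset \<Rightarrow> 'c \<Rightarrow> 'c assertion set set" where
  "NW_choices C R c = {{AG x1 c, AG x2 c} | x1 x2.
      x1 \<noteq> x2 \<and> (x1, c) \<in> AG_rec C R \<and> (x2, c) \<in> AG_rec C R}"

definition pairs_to_check :: "'c set \<Rightarrow> 'c list multiset \<Rightarrow> 'c \<Rightarrow> 'c \<Rightarrow> 'c set set" where
  "pairs_to_check C R w1 w2 = {{c1, c2} | c1 c2. c1 \<in> C \<and> c2 \<in> C \<and> c1 \<noteq> c2 \<and>
      {c1, c2} \<noteq> {w1, w2} \<and> {c1, c2} \<inter> NW C R = {}}"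

definition O_set :: "'c set \<Rightarrow> 'c list multiset \<Rightarrow> 'c \<Rightarrow> 'c set" where
  "O_set C R oc = {o'. (oc, o') \<in> AG_rec C R}"

definition G_set :: "'c set \<Rightarrow> 'c list multiset \<Rightarrow> 'c \<Rightarrow> 'c set" where
  "G_set C R y = {g. (g, y) \<in> AG_rec C R}"

text \<open>the transfer-value bound vector: \<tau>_x = 2/3 (only the value at x matters, W = {x})\<close>
definition tau23 :: "'c \<Rightarrow> real" where
  "tau23 = (\<lambda>_. 2 / 3)"

definition pair_choices :: "'c set \<Rightarrow> 'c list multiset \<Rightarrow> 'c set \<Rightarrow> 'c assertion set set" where
  "pair_choices C R P = {{NL oc y {x} tau23 (G_set C R y) (O_set C R oc - {x})}
        \<union> {AG oc o' | o'. o' \<in> O_set C R oc} \<union> {AG g y | g. g \<in> G_set C R y} | oc x y.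
      x \<in> P \<and> y \<in> P \<and> x \<noteq> y \<and> oc \<in> C - P \<and>
      holds C R (NL oc y {x} tau23 (G_set C R y) (O_set C R oc - {x}))}"

text \<open>FindAuditableAssertions run on recorded data R with cost function cost
  does not abort and returns A (choices of minimal cost; ties arbitrary).\<close>
definition find_auditable_assertions ::
  "'c set \<Rightarrow> 'c list multiset \<Rightarrow> 'c \<Rightarrow> 'c \<Rightarrow> ('c assertion set \<Rightarrow> real) \<Rightarrow> 'c assertion set \<Rightarrow> bool" where
  "find_auditable_assertions C R w1 w2 cost A \<longleftrightarrow>
     (\<forall>P \<in> pairs_to_check C R w1 w2. pair_choices C R P \<noteq> {}) \<and>
     (\<exists>chNW chP.
        (\<forall>c \<in> NW C R. chNW c \<in> NW_choices C R c \<and>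
            (\<forall>X \<in> NW_choices C R c. cost (chNW c) \<le> cost X)) \<and>
        (\<forall>P \<in> pairs_to_check C R w1 w2. chP P \<in> pair_choices C R P \<and>
            (\<forall>X \<in> pair_choices C R P. cost (chP P) \<le> cost X)) \<and>
        A = (\<Union>c \<in> NW C R. chNW c) \<union> (\<Union>P \<in> pairs_to_check C R w1 w2. chP P))"

end

theory Submission
  imports Defs
begin


lemma find_split:
  "find P xs = Some a \<Longrightarrow> \<exists>pre post. xs = pre @ a # post \<and> (\<forall>z\<in>set pre. \<not> P z) \<and> P a"
proof (induction xs)
  case Nil then show ?case by simp
next
  case (Cons b xs)
  show ?case
  proof (cases "P b")
    case True then show ?thesis using Cons.prems by (intro exI[of _ "[]"] exI[of _ xs]) auto
  next
    case False
    then have "find P xs = Some a" using Cons.prems by simp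
    from Cons.IH[OF this] obtain pre post where "xs = pre @ a # post" "\<forall>z\<in>set pre. \<not> P z" "P a" by blast
    then show ?thesis using False by (intro exI[of _ "b # pre"] exI[of _ post]) auto
  qed
qed

lemma find_SomeD: "find P xs = Some z \<Longrightarrow> P z"
  by (induction xs) (auto split: if_splits)

lemma find_app: "(\<forall>z\<in>set pre. \<not> P z) \<Longrightarrow> P a \<Longrightarrow> find P (pre @ a # post) = Some a"
  by (induction pre) auto

lemma find_app2: "(\<forall>z\<in>set pre. \<not> P z) \<Longrightarrow> find P (pre @ post) = find P post"
  by (induction pre) auto

lemma first_filter_split:
  "first (filter P xs) = Some a \<Longrightarrow> \<exists>pre post. xs = pre @ a # post \<and> (\<forall>z\<in>set pre. \<not> P z) \<and> P a"
  unfolding first_def by (auto split: list.splits dest!: filter_eq_ConsD)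

lemma first_filter_app: "(\<forall>z\<in>set pre. \<not> P z) \<Longrightarrow> P a \<Longrightarrow> first (filter P (pre @ a # post)) = Some a"
  unfolding first_def by simp

lemma dropWhile_ne: "c \<notin> set pre \<Longrightarrow> dropWhile (\<lambda>x. x \<noteq> c) (pre @ c # post) = c # post"
  by (induction pre) auto

lemma next_pref_find:
  assumes "find P xs = Some c" "\<And>z. P' z \<Longrightarrow> P z" "\<not> P' c"
  shows "find P' (tl (dropWhile (\<lambda>x. x \<noteq> c) xs)) = find P' xs"
proof -
  obtain pre post where xs: "xs = pre @ c # post" "\<forall>z\<in>set pre. \<not> P z" "P c"
    using find_split[OF assms(1)] by blast
  have "c \<notin> set pre" using xs by auto
  then have "dropWhile (\<lambda>x. x \<noteq> c) xs = c # post" using xs(1) \<open>c \<notin> set pre\<close> dropWhile_ne by simp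
  moreover have "find P' xs = find P' post"
    using xs assms(2,3) find_app2[of "pre @ [c]" P' post] by auto
  ultimately show ?thesis by simp
qed

lemma takeWhile_mono_set:
  "(\<And>z. P z \<Longrightarrow> P' z) \<Longrightarrow> set (takeWhile P xs) \<subseteq> set (takeWhile P' xs)"
  by (induction xs) auto

lemma find_in_takeWhile:
  assumes "find P xs = Some c" "\<not> P' c" "\<And>z. \<not> P z \<Longrightarrow> \<not> P' z"
  shows "c \<in> set (takeWhile (\<lambda>z. \<not> P' z) xs)"
proof -
  obtain pre post where xs: "xs = pre @ c # post" "\<forall>z\<in>set pre. \<not> P z" "P c"
    using find_split[OF assms(1)] by blast
  then have "takeWhile (\<lambda>z. \<not> P' z) xs = pre @ c # takeWhile (\<lambda>z. \<not> P' z) post"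
    using assms by simp
  then show ?thesis by simp
qed

lemma find_same:
  assumes "find P xs = p" "\<And>z. P' z \<Longrightarrow> P z" "\<And>z. p = Some z \<Longrightarrow> P' z"
  shows "find P' xs = p"
  using assms by (induction xs arbitrary: p) (auto split: if_splits)

lemma tally_add: "tally (add_mset (b, v, p) M) c = (if p = Some c then v else 0) + tally M c"
  unfolding tally_def by auto

lemma pile_size_add: "pile_size (add_mset (b, v, p) M) c = (if p = Some c then 1 else 0) + pile_size M c"
  unfolding pile_size_def by auto

lemma tally_upper:
  assumes "\<forall>(\<beta>,v,p)\<in>#M. p = Some c \<longrightarrow> v \<le> f \<beta>" "\<forall>(\<beta>,v,p)\<in>#M. 0 \<le> f \<beta>"
  shows "tally M c \<le> sum_mset (image_mset f (image_mset fst M))"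
  using assms
proof (induction M)
  case empty then show ?case by (simp add: tally_def)
next
  case (add x M)
  obtain b v p where x: "x = (b, v, p)" by (cases x) auto
  have "tally M c \<le> sum_mset (image_mset f (image_mset fst M))" using add by auto
  moreover have "(if p = Some c then v else 0) \<le> f b" using add.prems x by auto
  ultimately show ?case using x by (simp add: tally_add)
qed

lemma tally_lower:
  assumes "\<forall>(\<beta>,v,p)\<in>#M. p = Some c \<longrightarrow> 0 \<le> v" "\<forall>(\<beta>,v,p)\<in>#M. P \<beta> \<longrightarrow> p = Some c \<and> v = 1"
  shows "real (size (filter_mset P (image_mset fst M))) \<le> tally M c"
  using assms
proof (induction M)
  case empty then show ?case by (simp add: tally_def)
next
  case (add x M)
  obtain b v p where x: "x = (b, v, p)" by (cases x) auto
  have "real (size (filter_mset P (image_mset fst M))) \<le> tally M c" using add by auto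
  moreover have "P b \<longrightarrow> p = Some c \<and> v = 1" "p = Some c \<longrightarrow> 0 \<le> v" using add.prems x by auto
  ultimately show ?case using x by (auto simp add: tally_add)
qed

lemma tally_le_pile_size:
  assumes "\<forall>(\<beta>,v,p)\<in>#M. v \<le> 1"
  shows "tally M c \<le> real (pile_size M c)"
  using assms
proof (induction M)
  case empty then show ?case by (simp add: tally_def pile_size_def)
next
  case (add x M)
  obtain b v p where x: "x = (b, v, p)" by (cases x) auto
  show ?case using add x by (auto simp add: tally_add pile_size_add)
qed

lemma pile_size_le: "pile_size M c \<le> size M"
  unfolding pile_size_def by (rule size_filter_mset_lesseq)

lemma sum_if_size: "sum_mset (image_mset (\<lambda>b. if P b then 1 else 0) M) = real (size (filter_mset P M))"
  by (induction M) auto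



definition bok :: "'c set \<Rightarrow> 'c stv_state \<Rightarrow> 'c list \<times> real \<times> 'c option \<Rightarrow> bool" where
  "bok C s e = (case e of (\<beta>, v, p) \<Rightarrow> p = find (\<lambda>z. z \<in> eligible C s) \<beta> \<and> 0 \<le> v \<and> v \<le> 1 \<and>
     (v \<noteq> 1 \<longrightarrow> (\<exists>c\<in>set (takeWhile (\<lambda>z. z \<notin> eligible C s) \<beta>). c \<in> seated s)) \<and>
     (\<forall>c. first \<beta> = Some c \<and> c \<in> seated s \<longrightarrow> v \<le> 2/3))"

definition tot :: "('c list \<times> real \<times> 'c option) multiset \<Rightarrow> real" where
  "tot M = sum_mset (image_mset (\<lambda>(\<beta>, v, p). v) M)"

definition inv0 :: "'c set \<Rightarrow> 'c list multiset \<Rightarrow> 'c stv_state \<Rightarrow> bool" where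
  "inv0 C B s \<longleftrightarrow> image_mset fst (piles s) = B \<and> (\<forall>e\<in>#piles s. bok C s e) \<and>
     seated s \<subseteq> C \<and> elim s \<subseteq> C \<and> seated s \<inter> elim s = {} \<and>
     tot (piles s) + real (quota B 2) * real (card (seated s)) \<le> real (size B)"

lemma quota_facts: "1 \<le> real (quota B 2)" "real (size B) < 3 * real (quota B 2)"
  unfolding quota_def by auto

lemma first_find: "set \<beta> \<subseteq> C \<Longrightarrow> first \<beta> = find (\<lambda>z. z \<in> C) \<beta>"
  unfolding first_def by (cases \<beta>) auto

lemma inv0_init:
  assumes "valid_ballots C B"
  shows "inv0 C B (initial_state B)"
proof -
  have e: "eligible C (initial_state B) = C" unfolding eligible_def initial_state_def by simp
  have "image_mset fst (image_mset (\<lambda>\<beta>. (\<beta>, 1::real, first \<beta>)) B) = B"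
    by (simp add: multiset.map_comp o_def)
  moreover have "tot (image_mset (\<lambda>\<beta>. (\<beta>, 1::real, first \<beta>)) B) = real (size B)"
    unfolding tot_def by (induction B) auto
  moreover have "\<forall>e\<in>#image_mset (\<lambda>\<beta>. (\<beta>, 1::real, first \<beta>)) B. bok C (initial_state B) e"
    using assms unfolding valid_ballots_def bok_def e by (auto simp: first_find initial_state_def)
  ultimately show ?thesis unfolding inv0_def by (simp add: initial_state_def)
qed

lemma sum_swap_mset:
  "sum_mset (image_mset (\<lambda>e. \<Sum>c\<in>X. f c e) M) = (\<Sum>c\<in>X. sum_mset (image_mset (f c) M))"
  by (induction M) (auto simp: sum.distrib)

lemma pile_sum:
  "sum_mset (image_mset (\<lambda>(\<beta>, v, p). if p = Some c then t - v else 0) M) = real (pile_size M c) * t - tally M c"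
proof (induction M)
  case empty then show ?case by (simp add: tally_def pile_size_def)
next
  case (add x M)
  obtain b v p where x: "x = (b, v, p)" by (cases x) auto
  show ?case using add x by (auto simp: tally_add pile_size_add algebra_simps)
qed

lemma tot_seat:
  assumes fin: "finite X" and pos: "\<forall>c\<in>X. 0 < pile_size M c"
  shows "tot (seat_transfer E' X Q M) = tot M - Q * real (card X)"
proof -
  define tv where "tv c = (tally M c - Q) / real (pile_size M c)" for c
  have key: "(\<lambda>(\<beta>, v, p). v) (case e of (\<beta>, v, p) \<Rightarrow> case p of
       Some c \<Rightarrow> if c \<in> X then (\<beta>, (tally M c - Q) / real (pile_size M c), next_pref E' \<beta> c)
                 else (\<beta>, v, p)
     | None \<Rightarrow> (\<beta>, v, p)) = (\<lambda>(\<beta>, v, p). v) e + (\<Sum>c\<in>X. (\<lambda>(\<beta>, v, p). if p = Some c then tv c - v else 0) e)" for e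
  proof -
    obtain b v p where e: "e = (b, v, p)" by (cases e) auto
    show ?thesis
    proof (cases "\<exists>c\<in>X. p = Some c")
      case True
      then obtain c where c: "c \<in> X" "p = Some c" by blast
      have "(\<Sum>c'\<in>X. (if p = Some c' then tv c' - v else 0)) = tv c - v"
        using c fin by (simp add: sum.delta)
      then show ?thesis using e c by (simp add: tv_def)
    next
      case False
      then have "(\<Sum>c'\<in>X. (if p = Some c' then tv c' - v else 0)) = 0" by (auto intro: sum.neutral)
      then show ?thesis using e False by (cases p) auto
    qed
  qed
  have "tot (seat_transfer E' X Q M) = sum_mset (image_mset (\<lambda>e. (\<lambda>(\<beta>, v, p). v) e + (\<Sum>c\<in>X. (\<lambda>(\<beta>, v, p). if p = Some c then tv c - v else 0) e)) M)"
    unfolding tot_def seat_transfer_def multiset.map_comp o_def key ..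
  also have "\<dots> = tot M + (\<Sum>c\<in>X. sum_mset (image_mset (\<lambda>(\<beta>, v, p). if p = Some c then tv c - v else 0) M))"
    unfolding tot_def sum_mset.distrib sum_swap_mset by simp
  also have "\<dots> = tot M + (\<Sum>c\<in>X. - Q)"
    using pos by (intro arg_cong2[where f="(+)"] refl sum.cong) (auto simp: pile_sum tv_def)
  finally show ?thesis by simp
qed


lemma elig_seat: "eligible C (St (seated s \<union> X) (elim s) M) = eligible C s - X"
  unfolding eligible_def by auto

lemma elig_elim: "eligible C (St (seated s) (elim s \<union> {e}) M) = eligible C s - {e}"
  unfolding eligible_def by auto

lemma inv0_seat:
  assumes fin: "finite C" and inv: "inv0 C B s"
    and X: "X = {c \<in> eligible C s. tally (piles s) c \<ge> real (quota B 2)}"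
  shows "inv0 C B (St (seated s \<union> X) (elim s) (seat_transfer (eligible C s - X) X (real (quota B 2)) (piles s)))"
    (is "inv0 C B ?s'")
proof -
  define Q where "Q = real (quota B 2)"
  define M where "M = piles s"
  define E where "E = eligible C s"
  define E' where "E' = E - X"
  define tv where "tv c = (tally M c - Q) / real (pile_size M c)" for c
  have Q: "1 \<le> Q" "real (size B) < 3 * Q" using quota_facts Q_def by auto
  have XE: "X \<subseteq> E" using X E_def by auto
  have finX: "finite X" by (rule finite_subset[OF _ fin]) (use XE in \<open>auto simp: E_def eligible_def\<close>)
  have bokM: "\<forall>e\<in>#M. bok C s e" and fstM: "image_mset fst M = B" using inv M_def by (simp_all add: inv0_def)
  have v1: "\<forall>(\<beta>, v, p)\<in>#M. v \<le> 1" using bokM unfolding bok_def by auto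
  have sizeM: "size M = size B" using fstM by (metis size_image_mset)
  have tvb: "0 \<le> tv c \<and> tv c \<le> 2/3 \<and> 0 < pile_size M c" if "c \<in> X" for c
  proof -
    have t: "Q \<le> tally M c" using that X M_def Q_def by auto
    have tn: "tally M c \<le> real (pile_size M c)" using tally_le_pile_size[OF v1] .
    have nb: "real (pile_size M c) \<le> real (size B)" using pile_size_le[of M c] sizeM by simp
    have n0: "0 < pile_size M c" using t tn Q by auto
    have "tally M c - Q \<le> 2/3 * real (pile_size M c)" using tn nb Q by auto
    then have "tv c \<le> 2/3" unfolding tv_def using n0 by (simp add: divide_le_eq)
    moreover have "0 \<le> tv c" unfolding tv_def using t by simp
    ultimately show ?thesis using n0 by simp
  qed
  have el': "eligible C ?s' = E'" unfolding elig_seat E'_def E_def by simp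
  have bok': "bok C ?s' e'" if "e' \<in># piles ?s'" for e'
  proof -
    from that obtain e where e: "e \<in># M" and e': "e' = (case e of (\<beta>, v, p) \<Rightarrow> case p of
       Some c \<Rightarrow> if c \<in> X then (\<beta>, tv c, next_pref E' \<beta> c) else (\<beta>, v, p)
     | None \<Rightarrow> (\<beta>, v, p))"
      unfolding seat_transfer_def M_def tv_def Q_def E'_def E_def by auto
    obtain \<beta> v p where ev: "e = (\<beta>, v, p)" by (cases e) auto
    have b: "p = find (\<lambda>z. z \<in> E) \<beta>" "0 \<le> v" "v \<le> 1"
      "v \<noteq> 1 \<longrightarrow> (\<exists>c\<in>set (takeWhile (\<lambda>z. z \<notin> E) \<beta>). c \<in> seated s)"
      "\<forall>c. first \<beta> = Some c \<and> c \<in> seated s \<longrightarrow> v \<le> 2/3"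
      using bokM e ev unfolding bok_def E_def by auto
    show ?thesis
    proof (cases "\<exists>c\<in>X. p = Some c")
      case True
      then obtain c where c: "c \<in> X" "p = Some c" by blast
      have e'': "e' = (\<beta>, tv c, next_pref E' \<beta> c)" using e' ev c by simp
      have f: "next_pref E' \<beta> c = find (\<lambda>z. z \<in> E') \<beta>"
        unfolding next_pref_def by (rule next_pref_find[of "\<lambda>z. z \<in> E"]) (use b(1) c E'_def in auto)
      have "c \<in> set (takeWhile (\<lambda>z. z \<notin> E') \<beta>)"
        using find_in_takeWhile[of "\<lambda>z. z \<in> E" \<beta> c "\<lambda>z. z \<in> E'"] b(1) c E'_def by auto
      then show ?thesis unfolding bok_def e'' el' using f tvb[OF c(1)] c(1) by auto
    next
      case False
      have e'': "e' = e"
      proof (cases p)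
        case None then show ?thesis using e' ev by simp
      next
        case (Some c) then show ?thesis using e' ev False by simp
      qed
      have f: "find (\<lambda>z. z \<in> E') \<beta> = p"
        by (rule find_same[of "\<lambda>z. z \<in> E"]) (use False b(1) E'_def in \<open>auto dest: find_SomeD\<close>)
      have tw: "set (takeWhile (\<lambda>z. z \<notin> E) \<beta>) \<subseteq> set (takeWhile (\<lambda>z. z \<notin> E') \<beta>)"
        by (rule takeWhile_mono_set) (auto simp: E'_def)
      have fs: "v \<le> 2/3" if "first \<beta> = Some c" "c \<in> seated s \<union> X" for c
      proof (cases "c \<in> X")
        case True
        then have "c \<in> E" using XE by auto
        then have "find (\<lambda>z. z \<in> E) \<beta> = Some c" using that(1) unfolding first_def
          by (cases \<beta>) auto
        then show ?thesis using False True b(1) by auto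
      next
        case False then show ?thesis using b(5) that by auto
      qed
      have "v \<noteq> 1 \<longrightarrow> (\<exists>c\<in>set (takeWhile (\<lambda>z. z \<notin> E') \<beta>). c \<in> seated s \<union> X)"
        using b(4) tw by blast
      then show ?thesis unfolding bok_def e'' ev el' using f b(2,3) fs by auto
    qed
  qed
  have fst': "image_mset fst (piles ?s') = B"
  proof -
    have "image_mset fst (piles ?s') = image_mset (\<lambda>e. fst e) M"
      unfolding seat_transfer_def M_def by (auto simp: multiset.map_comp o_def intro!: image_mset_cong split: option.splits prod.splits)
    then show ?thesis using fstM by simp
  qed
  have tot': "tot (piles ?s') = tot M - Q * real (card X)"
    unfolding Q_def M_def by simp (rule tot_seat[OF finX], use tvb M_def in auto)
  have disj: "seated s \<inter> X = {}" using XE unfolding E_def eligible_def by auto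
  have fins: "finite (seated s)" using inv fin unfolding inv0_def by (meson finite_subset)
  have card: "card (seated s \<union> X) = card (seated s) + card X" using card_Un_disjoint[OF fins finX disj] .
  have "tot M + Q * real (card (seated s)) \<le> real (size B)" using inv unfolding inv0_def M_def Q_def by auto
  then have "tot (piles ?s') + Q * real (card (seated ?s')) \<le> real (size B)"
    using tot' card by (simp add: algebra_simps)
  moreover have "seated ?s' \<subseteq> C" "elim ?s' \<subseteq> C" "seated ?s' \<inter> elim ?s' = {}"
    using inv XE unfolding inv0_def E_def eligible_def by auto
  ultimately show ?thesis unfolding inv0_def using fst' bok' Q_def by auto
qed

lemma inv0_elim:
  assumes inv: "inv0 C B s" and e: "e \<in> eligible C s"
  shows "inv0 C B (St (seated s) (elim s \<union> {e}) (elim_transfer (eligible C s - {e}) e (piles s)))"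
    (is "inv0 C B ?s'")
proof -
  define M where "M = piles s"
  define E where "E = eligible C s"
  define E' where "E' = E - {e}"
  have bokM: "\<forall>e\<in>#M. bok C s e" and fstM: "image_mset fst M = B" using inv M_def by (simp_all add: inv0_def)
  have el': "eligible C ?s' = E'" unfolding elig_elim E'_def E_def by simp
  have bok': "bok C ?s' x'" if "x' \<in># piles ?s'" for x'
  proof -
    from that obtain x where x: "x \<in># M" and x': "x' = (case x of (\<beta>, v, p) \<Rightarrow>
       if p = Some e then (\<beta>, v, next_pref E' \<beta> e) else (\<beta>, v, p))"
      unfolding elim_transfer_def M_def E'_def E_def by auto
    obtain \<beta> v p where ev: "x = (\<beta>, v, p)" by (cases x) auto
    have b: "p = find (\<lambda>z. z \<in> E) \<beta>" "0 \<le> v" "v \<le> 1"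
      "v \<noteq> 1 \<longrightarrow> (\<exists>c\<in>set (takeWhile (\<lambda>z. z \<notin> E) \<beta>). c \<in> seated s)"
      "\<forall>c. first \<beta> = Some c \<and> c \<in> seated s \<longrightarrow> v \<le> 2/3"
      using bokM x ev unfolding bok_def E_def by auto
    have tw: "set (takeWhile (\<lambda>z. z \<notin> E) \<beta>) \<subseteq> set (takeWhile (\<lambda>z. z \<notin> E') \<beta>)"
      by (rule takeWhile_mono_set) (auto simp: E'_def)
    have f: "(if p = Some e then next_pref E' \<beta> e else p) = find (\<lambda>z. z \<in> E') \<beta>"
    proof (cases "p = Some e")
      case True
      have "find (\<lambda>z. z \<in> E') (tl (dropWhile (\<lambda>x. x \<noteq> e) \<beta>)) = find (\<lambda>z. z \<in> E') \<beta>"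
        by (rule next_pref_find[of "\<lambda>z. z \<in> E"]) (use b(1) True E'_def in auto)
      then show ?thesis unfolding next_pref_def using True by simp
    next
      case False
      have "find (\<lambda>z. z \<in> E') \<beta> = p"
        by (rule find_same[of "\<lambda>z. z \<in> E"]) (use False b(1) E'_def in \<open>auto dest: find_SomeD\<close>)
      then show ?thesis using False by simp
    qed
    have "x' = (\<beta>, v, find (\<lambda>z. z \<in> E') \<beta>)" using x' ev f by (auto split: if_splits)
    moreover have "v \<noteq> 1 \<longrightarrow> (\<exists>c\<in>set (takeWhile (\<lambda>z. z \<notin> E') \<beta>). c \<in> seated s)"
      using b(4) tw by blast
    ultimately show ?thesis unfolding bok_def el' using b(2,3,5) by auto
  qed
  have fst': "image_mset fst (piles ?s') = B"
  proof -
    have "image_mset fst (piles ?s') = image_mset (\<lambda>e. fst e) M"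
      unfolding elim_transfer_def M_def by (auto simp: multiset.map_comp o_def intro!: image_mset_cong split: prod.splits)
    then show ?thesis using fstM by simp
  qed
  have tot': "tot (piles ?s') = tot M"
    unfolding tot_def elim_transfer_def M_def
    by (simp add: multiset.map_comp o_def, intro arg_cong[where f=sum_mset] image_mset_cong) (auto split: prod.splits)
  have es: "e \<notin> seated s" "e \<in> C" using e unfolding eligible_def by auto
  have "seated ?s' \<subseteq> C" "elim ?s' \<subseteq> C" "seated ?s' \<inter> elim ?s' = {}"
    "tot (piles ?s') + real (quota B 2) * real (card (seated ?s')) \<le> real (size B)"
    using inv es tot' unfolding inv0_def M_def by auto
  then show ?thesis using fst' bok' unfolding inv0_def by blast
qed



abbreviation reach where
  "reach C B s \<equiv> (stv_step C (real (quota B 2)) 2)\<^sup>*\<^sup>* (initial_state B) s"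

lemma step_cases:
  assumes "stv_step C Q S s s'"
  obtains X where "X = {c \<in> eligible C s. tally (piles s) c \<ge> Q}" "X \<noteq> {}"
     "s' = St (seated s \<union> X) (elim s) (seat_transfer (eligible C s - X) X Q (piles s))"
  | e where "\<forall>c \<in> eligible C s. tally (piles s) c < Q" "e \<in> eligible C s"
     "\<forall>c \<in> eligible C s. tally (piles s) e \<le> tally (piles s) c"
     "s' = St (seated s) (elim s \<union> {e}) (elim_transfer (eligible C s - {e}) e (piles s))"
  using assms by (cases rule: stv_step.cases) auto

lemma step_mono:
  assumes "stv_step C Q S s s'"
  shows "seated s \<subseteq> seated s'" "elim s \<subseteq> elim s'"
  using assms by (cases rule: step_cases; auto)+

lemma steps_mono:
  assumes "(stv_step C Q S)\<^sup>*\<^sup>* s s'"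
  shows "seated s \<subseteq> seated s' \<and> elim s \<subseteq> elim s'"
  using assms by (induction rule: rtranclp_induct) (use step_mono in blast)+

lemma inv0_reach:
  assumes "reach C B s" "finite C" "valid_ballots C B"
  shows "inv0 C B s"
  using assms(1)
proof (induction rule: rtranclp_induct)
  case base then show ?case using inv0_init[OF assms(3)] .
next
  case (step s s')
  from step.hyps(2) show ?case
  proof (cases rule: step_cases)
    case (1 X) then show ?thesis using inv0_seat[OF assms(2) step.IH] by simp
  next
    case (2 e) then show ?thesis using inv0_elim[OF step.IH] by simp
  qed
qed

lemma inv0_bok: "inv0 C B s \<Longrightarrow> (\<beta>, v, p) \<in># piles s \<Longrightarrow> bok C s (\<beta>, v, p)"
  unfolding inv0_def by blast

lemma inv0_B: "inv0 C B s \<Longrightarrow> image_mset fst (piles s) = B"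
  unfolding inv0_def by blast

lemma bokD:
  assumes "bok C s (\<beta>, v, p)"
  shows "p = find (\<lambda>z. z \<in> eligible C s) \<beta>" "0 \<le> v" "v \<le> 1"
    "v \<noteq> 1 \<Longrightarrow> \<exists>c\<in>set (takeWhile (\<lambda>z. z \<notin> eligible C s) \<beta>). c \<in> seated s"
    "first \<beta> = Some c \<Longrightarrow> c \<in> seated s \<Longrightarrow> v \<le> 2/3"
  using assms unfolding bok_def by auto

lemma tally_Lbasic:
  assumes inv: "inv0 C B s" and x: "x \<in> eligible C s"
  shows "real (L_basic B x) \<le> tally (piles s) x"
proof -
  have A: "(p = Some x \<longrightarrow> 0 \<le> v) \<and> (first \<beta> = Some x \<longrightarrow> p = Some x \<and> v = 1)"
    if m: "(\<beta>, v, p) \<in># piles s" for \<beta> v p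
  proof -
    note b = bokD[OF inv0_bok[OF inv m]]
    have "p = Some x \<and> v = 1" if f: "first \<beta> = Some x"
    proof -
      obtain r where \<beta>: "\<beta> = x # r" using f unfolding first_def by (cases \<beta>) auto
      show ?thesis using b(1,4) x \<beta> by auto
    qed
    then show ?thesis using b(2) by auto
  qed
  have "real (size (filter_mset (\<lambda>\<beta>. first \<beta> = Some x) (image_mset fst (piles s)))) \<le> tally (piles s) x"
    by (rule tally_lower) (use A in auto)
  then show ?thesis unfolding L_basic_def inv0_B[OF inv] .
qed

lemma tally_Ucomp:
  assumes inv: "inv0 C B s" and x: "x \<in> eligible C s"
  shows "tally (piles s) y \<le> real (U_comp B y x)"
proof -
  have A: "p = Some y \<longrightarrow> v \<le> (if first (sigma {y, x} \<beta>) = Some y then 1 else 0::real)"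
    if m: "(\<beta>, v, p) \<in># piles s" for \<beta> v p
  proof
    note b = bokD[OF inv0_bok[OF inv m]]
    assume p: "p = Some y"
    then obtain pre post where \<beta>: "\<beta> = pre @ y # post" "\<forall>z\<in>set pre. z \<notin> eligible C s"
      using find_split[of "\<lambda>z. z \<in> eligible C s" \<beta> y] b(1) by auto
    have "x \<notin> set pre" using \<beta>(2) x by auto
    moreover have "y \<notin> set pre" using \<beta>(2) b(1) p find_SomeD[of "\<lambda>z. z \<in> eligible C s" \<beta> y] by auto
    ultimately have "first (sigma {y, x} \<beta>) = Some y" unfolding sigma_def \<beta>(1)
      by (intro first_filter_app) auto
    then show "v \<le> (if first (sigma {y, x} \<beta>) = Some y then 1 else 0::real)" using b(3) by simp
  qed
  have "tally (piles s) y \<le> sum_mset (image_mset (\<lambda>\<beta>. if first (sigma {y, x} \<beta>) = Some y then 1 else 0) (image_mset fst (piles s)))"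
    by (rule tally_upper) (use A in auto)
  then show ?thesis unfolding U_comp_def inv0_B[OF inv] sum_if_size .
qed

definition jag :: "'c set \<Rightarrow> 'c stv_state \<Rightarrow> 'c \<Rightarrow> 'c \<Rightarrow> bool" where
  "jag C s x y \<longleftrightarrow> (y \<in> eligible C s \<longrightarrow> x \<notin> elim s) \<and> (y \<in> seated s \<longrightarrow> x \<in> seated s)"

lemma jag_reach:
  assumes "reach C B s" "finite C" "valid_ballots C B"
    and ag: "holds C B (AG x y)" and xy: "x \<noteq> y" "x \<in> C" "y \<in> C"
  shows "jag C s x y"
  using assms(1)
proof (induction rule: rtranclp_induct)
  case base then show ?case unfolding jag_def initial_state_def by simp
next
  case (step s s')
  have inv: "inv0 C B s" using inv0_reach[OF step.hyps(1) assms(2,3)] .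
  have agr: "real (U_comp B y x) < real (L_basic B x)" using ag by simp
  have key: "tally (piles s) y < tally (piles s) x" if "x \<in> eligible C s"
    using tally_Lbasic[OF inv that] tally_Ucomp[OF inv that, of y] agr by linarith
  from step.hyps(2) show ?case
  proof (cases rule: step_cases)
    case (1 X)
    have ys: "x \<in> seated s \<union> X" if "y \<in> X"
    proof -
      have "y \<in> eligible C s" using that 1 by auto
      then have "x \<notin> elim s" using step.IH unfolding jag_def by auto
      then have "x \<in> seated s \<or> x \<in> eligible C s" using xy unfolding eligible_def by auto
      moreover have "tally (piles s) y \<ge> real (quota B 2)" using that 1 by auto
      ultimately show ?thesis using key 1 by fastforce
    qed
    show ?thesis using step.IH ys unfolding jag_def 1(3) elig_seat by auto
  next
    case (2 e)
    have "x \<noteq> e" if "y \<in> eligible C s" "e = x"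
      using key[of] that 2(2,3) by (metis not_less)
    then show ?thesis using step.IH unfolding jag_def 2(4) elig_elim by auto
  qed
qed

lemma reach_final_W:
  assumes "reach C B f" "finite C" "valid_ballots C B"
    and W: "W = (if 2 \<le> card (seated f) then seated f else seated f \<union> eligible C f)"
    and ag: "holds C B (AG a b)" and ab: "a \<noteq> b" "a \<in> C" "b \<in> C"
    and bW: "b \<in> W"
  shows "a \<in> W"
proof -
  have j: "jag C f a b" using jag_reach[OF assms(1-3) ag ab] .
  show ?thesis
  proof (cases "2 \<le> card (seated f)")
    case True then show ?thesis using j W bW unfolding jag_def by auto
  next
    case False then show ?thesis using j W bW ab unfolding jag_def eligible_def by auto
  qed
qed

lemma W_sub: "W = (if 2 \<le> card (seated f) then seated f else seated f \<union> eligible C f) \<Longrightarrow>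
   inv0 C B f \<Longrightarrow> W \<inter> elim f = {} \<and> seated f \<subseteq> W"
  unfolding inv0_def eligible_def by (auto split: if_splits)



lemma tot_lower:
  assumes "\<forall>(\<beta>,v,p)\<in>#M. 0 \<le> v" "\<forall>(\<beta>,v,p)\<in>#M. P \<beta> \<longrightarrow> v = 1"
  shows "real (size (filter_mset P (image_mset fst M))) \<le> tot M"
  using assms
proof (induction M)
  case empty then show ?case by (simp add: tot_def)
next
  case (add x M)
  obtain b v p where x: "x = (b, v, p)" by (cases x) auto
  have "real (size (filter_mset P (image_mset fst M))) \<le> tot M" using add by auto
  moreover have "P b \<longrightarrow> v = 1" "0 \<le> v" using add.prems x by auto
  ultimately show ?case using x by (auto simp add: tot_def)
qed

lemma Lelim_ballot:
  assumes inv: "inv0 C B s" and valid: "valid_ballots C B" and oc: "oc \<in> eligible C s"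
    and Os: "Os \<inter> seated s = {}" and m: "(\<beta>, v, p) \<in># piles s"
    and f: "first (sigma (C - Os) \<beta>) = Some oc"
  shows "v = 1 \<and> (Os \<inter> eligible C s = {} \<longrightarrow> p = Some oc)"
proof -
  note b = bokD[OF inv0_bok[OF inv m]]
  have "\<beta> \<in># B" using m inv0_B[OF inv] by force
  then have sub: "set \<beta> \<subseteq> C" using valid unfolding valid_ballots_def by auto
  obtain pre post where \<beta>: "\<beta> = pre @ oc # post" "\<forall>z\<in>set pre. z \<notin> C - Os"
    using first_filter_split[of "\<lambda>x. x \<in> C - Os" \<beta> oc] f unfolding sigma_def by auto
  have preO: "set pre \<subseteq> Os" using \<beta> sub by auto
  have "set (takeWhile (\<lambda>z. z \<notin> eligible C s) \<beta>) \<subseteq> set pre"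
    unfolding \<beta>(1) using oc by (induction pre) auto
  then have "v = 1" using b(4) preO Os by blast
  moreover have "p = Some oc" if "Os \<inter> eligible C s = {}"
    using b(1) find_app[of pre "\<lambda>z. z \<in> eligible C s" oc post] preO that oc \<beta>(1) by auto
  ultimately show ?thesis by blast
qed

lemma tally_Lelim:
  assumes inv: "inv0 C B s" and valid: "valid_ballots C B" and oc: "oc \<in> eligible C s"
    and Os: "Os \<inter> seated s = {}" "Os \<inter> eligible C s = {}"
  shows "real (L_elim C B oc Os) \<le> tally (piles s) oc"
proof -
  have "real (size (filter_mset (\<lambda>\<beta>. first (sigma (C - Os) \<beta>) = Some oc) (image_mset fst (piles s)))) \<le> tally (piles s) oc"
    by (rule tally_lower) (use Lelim_ballot[OF inv valid oc Os(1)] Os(2) bokD(2)[OF inv0_bok[OF inv]] in auto)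
  then show ?thesis unfolding L_elim_def inv0_B[OF inv] .
qed

lemma tot_Lelim:
  assumes inv: "inv0 C B s" and valid: "valid_ballots C B" and oc: "oc \<in> eligible C s"
    and Os: "Os \<inter> seated s = {}"
  shows "real (L_elim C B oc Os) \<le> tot (piles s)"
proof -
  have "real (size (filter_mset (\<lambda>\<beta>. first (sigma (C - Os) \<beta>) = Some oc) (image_mset fst (piles s)))) \<le> tot (piles s)"
    by (rule tot_lower) (use Lelim_ballot[OF inv valid oc Os(1)] bokD(2)[OF inv0_bok[OF inv]] in auto)
  then show ?thesis unfolding L_elim_def inv0_B[OF inv] .
qed

lemma u_Max:
  assumes "first \<beta> = Some x" "y \<in> set \<beta>" "y \<noteq> x"
  shows "Max (tau23 ` {v \<in> {x}. precedes v y \<beta>}) = 2/3"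
proof -
  obtain r where \<beta>: "\<beta> = x # r" using assms(1) unfolding first_def by (cases \<beta>) auto
  then have "y \<in> set r" using assms by auto
  then obtain k where k: "k < length r" "r ! k = y" by (auto simp: in_set_conv_nth)
  have "precedes x y \<beta>" unfolding precedes_def \<beta>
    by (rule exI[of _ 0], rule exI[of _ "Suc k"]) (use k in auto)
  then have "{v \<in> {x}. precedes v y \<beta>} = {x}" by auto
  then show ?thesis by (simp add: tau23_def)
qed

lemma u_nonneg: "y \<noteq> x \<Longrightarrow> 0 \<le> u_complex y oc {x} tau23 G \<beta>"
  unfolding u_complex_def using u_Max[of \<beta> x y] by auto

lemma tally_Ucomplex:
  assumes inv: "inv0 C B s" and oc: "oc \<in> eligible C s" and x: "x \<notin> elim s" "x \<in> C"
    and G: "G \<subseteq> {x}" and yx: "y \<noteq> x" and yoc: "y \<noteq> oc"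
  shows "tally (piles s) y \<le> U_complex B y oc {x} tau23 G"
proof -
  have A: "p = Some y \<longrightarrow> v \<le> u_complex y oc {x} tau23 G \<beta>"
    if m: "(\<beta>, v, p) \<in># piles s" for \<beta> v p
  proof
    note b = bokD[OF inv0_bok[OF inv m]]
    assume p: "p = Some y"
    then obtain pre post where \<beta>: "\<beta> = pre @ y # post" "\<forall>z\<in>set pre. z \<notin> eligible C s"
      using find_split[of "\<lambda>z. z \<in> eligible C s" \<beta> y] b(1) by auto
    have ny: "y \<notin> set pre" using \<beta>(2) b(1) p find_SomeD[of "\<lambda>z. z \<in> eligible C s" \<beta> y] by auto
    have "oc \<notin> set pre" using \<beta>(2) oc by auto
    then have s1: "first (sigma {oc, y} \<beta>) = Some y" unfolding sigma_def \<beta>(1)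
      using ny by (intro first_filter_app) auto
    have G': "\<not> (\<exists>g\<in>G - {x}. first (sigma {g, y} \<beta>) = Some g)" using G by auto
    have yin: "y \<in> set \<beta>" using \<beta> by auto
    show "v \<le> u_complex y oc {x} tau23 G \<beta>"
    proof (cases "first \<beta> = Some x")
      case True
      then have "x \<in> set pre" using \<beta>(1) yx unfolding first_def by (cases pre) auto
      then have "x \<notin> eligible C s" using \<beta>(2) by auto
      then have "x \<in> seated s" using x unfolding eligible_def by auto
      then have "v \<le> 2/3" using b(5) True by auto
      moreover have "u_complex y oc {x} tau23 G \<beta> = 2/3"
        unfolding u_complex_def using G' yin s1 yoc True u_Max[OF True yin yx] by auto
      ultimately show ?thesis by simp
    next
      case False
      then have "u_complex y oc {x} tau23 G \<beta> = 1"
        unfolding u_complex_def using G' yin s1 yoc by auto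
      then show ?thesis using b(3) by simp
    qed
  qed
  have "tally (piles s) y \<le> sum_mset (image_mset (u_complex y oc {x} tau23 G) (image_mset fst (piles s)))"
    by (rule tally_upper) (use A u_nonneg[OF yx] in auto)
  then show ?thesis unfolding U_complex_def inv0_B[OF inv] .
qed



lemma pair_case:
  assumes fin: "finite C" and valid: "valid_ballots C B" and reachf: "reach C B f"
    and Wd: "W = (if 2 \<le> card (seated f) then seated f else seated f \<union> eligible C f)"
    and Wxy: "W = {x, y}" and xy: "x \<noteq> y" "x \<in> C" "y \<in> C"
    and oc: "oc \<in> C" "oc \<noteq> x" "oc \<noteq> y"
    and NL: "U_complex B y oc {x} tau23 G < real (L_elim C B oc (Ob - {x}))"
    and agO: "\<forall>o'\<in>Ob. holds C B (AG oc o') \<and> o' \<in> C \<and> o' \<noteq> oc"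
    and agG: "\<forall>g\<in>G. holds C B (AG g y) \<and> g \<in> C \<and> g \<noteq> y"
  shows False
proof -
  define Q where "Q = real (quota B 2)"
  define L where "L = real (L_elim C B oc (Ob - {x}))"
  have invf: "inv0 C B f" using inv0_reach[OF reachf fin valid] .
  have Wf: "W \<inter> elim f = {}" "seated f \<subseteq> W" using W_sub[OF Wd invf] by auto
  have yW: "y \<in> W" and xW: "x \<in> W" using Wxy by auto
  have ocW: "oc \<notin> W" using Wxy oc by auto
  have G: "G \<subseteq> {x}"
  proof
    fix g assume g: "g \<in> G"
    then have "g \<in> W" using reach_final_W[OF reachf fin valid Wd _ _ _ _ yW] agG xy by auto
    then show "g \<in> {x}" using Wxy agG g by auto
  qed
  have Oseated: "o' \<notin> seated f" if "o' \<in> Ob" for o'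
  proof
    assume "o' \<in> seated f"
    then have "o' \<in> W" using Wf by auto
    then have "oc \<in> W" using reach_final_W[OF reachf fin valid Wd, of oc o'] agO that oc by auto
    then show False using ocW by simp
  qed
  have xe: "x \<notin> elim f" and ye: "y \<notin> elim f" and ocs: "oc \<notin> seated f" using Wf Wxy ocW by auto
  have K: "(stv_step C Q 2)\<^sup>*\<^sup>* s f \<longrightarrow> oc \<notin> elim s \<and> (y \<in> seated s \<longrightarrow> Q < L)" if rs: "reach C B s" for s
    using rs
  proof (induction rule: rtranclp_induct)
    case base then show ?case by (simp add: initial_state_def)
  next
    case (step s s')
    show ?case
    proof
      assume s'f: "(stv_step C Q 2)\<^sup>*\<^sup>* s' f"
      have sf: "(stv_step C Q 2)\<^sup>*\<^sup>* s f" using step.hyps(2) s'f Q_def by (meson converse_rtranclp_into_rtranclp)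
      have IH: "oc \<notin> elim s" "y \<in> seated s \<Longrightarrow> Q < L" using step.IH sf by auto
      have m1: "seated s' \<subseteq> seated f" "elim s' \<subseteq> elim f" using steps_mono[OF s'f] by auto
      have m0: "seated s \<subseteq> seated s'" "elim s \<subseteq> elim s'" using step_mono[OF step.hyps(2)] by auto
      have inv: "inv0 C B s" using inv0_reach[OF step.hyps(1) fin valid] .
      have reach': "reach C B s'" using step.hyps by (meson rtranclp.rtrancl_into_rtrancl)
      have ocE: "oc \<in> eligible C s" using IH(1) m0 m1 ocs oc unfolding eligible_def by auto
      have xes: "x \<notin> elim s" using m0 m1 xe by auto
      have Ubound: "tally (piles s) y \<le> U_complex B y oc {x} tau23 G"
        using tally_Ucomplex[OF inv ocE xes xy(2) G _ ] xy oc by auto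
      from step.hyps(2) show "oc \<notin> elim s' \<and> (y \<in> seated s' \<longrightarrow> Q < L)"
      proof (cases rule: step_cases)
        case (1 X)
        have "Q < L" if "y \<in> X"
        proof -
          have "Q \<le> tally (piles s) y" using that 1 Q_def by auto
          then show ?thesis using Ubound NL L_def by linarith
        qed
        then show ?thesis using IH 1(3) by auto
      next
        case (2 e)
        have "e \<noteq> oc"
        proof
          assume eoc: "e = oc"
          have Oel: "o' \<notin> eligible C s \<and> o' \<notin> seated s" if "o' \<in> Ob - {x}" for o'
          proof -
            have j: "jag C s' oc o'" using jag_reach[OF reach' fin valid, of oc o'] agO that oc by auto
            have "oc \<in> elim s'" using 2(4) eoc by simp
            then have "o' \<notin> eligible C s'" using j unfolding jag_def by auto
            moreover have "eligible C s' = eligible C s - {oc}" using 2(4) eoc elig_elim by simp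
            moreover have "o' \<noteq> oc" using agO that by auto
            ultimately have "o' \<notin> eligible C s" by blast
            moreover have "o' \<notin> seated s" using Oseated that m0 m1 by auto
            ultimately show ?thesis by simp
          qed
          have Lt: "L \<le> tally (piles s) oc" unfolding L_def
            by (rule tally_Lelim[OF inv valid ocE]) (use Oel in auto)
          have "y \<notin> elim s" using m0 m1 ye by auto
          then have "y \<in> eligible C s \<or> y \<in> seated s" using xy unfolding eligible_def by auto
          then show False
          proof
            assume "y \<in> eligible C s"
            then have "tally (piles s) oc \<le> tally (piles s) y" using 2(3) eoc by auto
            then show False using Lt Ubound NL L_def by linarith
          next
            assume "y \<in> seated s"
            then have "Q < L" using IH by auto
            moreover have "tally (piles s) oc < Q" using 2(1) eoc ocE Q_def by auto
            ultimately show False using Lt by linarith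
          qed
        qed
        then show ?thesis using IH 2(4) by auto
      qed
    qed
  qed
  have Kf: "oc \<notin> elim f" "y \<in> seated f \<Longrightarrow> Q < L" using K[OF reachf] Q_def by auto
  have ocEf: "oc \<in> eligible C f" using Kf(1) ocs oc unfolding eligible_def by auto
  show False
  proof (cases "2 \<le> card (seated f)")
    case False
    then show False using Wd ocEf ocW by auto
  next
    case True
    then have sf: "seated f = {x, y}" using Wd Wxy by auto
    then have QL: "Q < L" using Kf by auto
    have Os: "(Ob - {x}) \<inter> seated f = {}" using sf agO oc Oseated by auto
    have "L \<le> tot (piles f)" unfolding L_def by (rule tot_Lelim[OF invf valid ocEf Os])
    moreover have "tot (piles f) + Q * 2 \<le> real (size B)"
      using invf sf xy unfolding inv0_def Q_def by auto
    moreover have "real (size B) < 3 * Q" using quota_facts Q_def by auto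
    ultimately show False using QL by linarith
  qed
qed



theorem theorem1:
  fixes C :: "'c set" and B R :: "'c list multiset" and w1 w2 :: 'c
    and cost :: "'c assertion set \<Rightarrow> real" and A :: "'c assertion set" and W :: "'c set"
  assumes "finite C"
    and "valid_ballots C B"
    and "w1 \<in> C" and "w2 \<in> C" and "w1 \<noteq> w2"
    and "find_auditable_assertions C R w1 w2 cost A"
    and "\<forall>a \<in> A. holds C B a"
    and "stv_result C B 2 W"
  shows "\<forall>c1 c2. c1 \<in> C \<and> c2 \<in> C \<and> c1 \<noteq> c2 \<and> {c1, c2} \<noteq> {w1, w2} \<longrightarrow> W \<noteq> {c1, c2}"
proof (intro allI impI notI)
  fix c1 c2
  assume cc: "c1 \<in> C \<and> c2 \<in> C \<and> c1 \<noteq> c2 \<and> {c1, c2} \<noteq> {w1, w2}" and WP: "W = {c1, c2}"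
  note fin = assms(1) and valid = assms(2) and hA = assms(7)
  obtain f where reachf: "reach C B f" and Wd: "W = (if 2 \<le> card (seated f) then seated f else seated f \<union> eligible C f)"
    using assms(8) unfolding stv_result_def by blast
  obtain chNW chP where
    chNW: "\<forall>c \<in> NW C R. chNW c \<in> NW_choices C R c" and
    chP: "\<forall>P \<in> pairs_to_check C R w1 w2. chP P \<in> pair_choices C R P" and
    Adef: "A = (\<Union>c \<in> NW C R. chNW c) \<union> (\<Union>P \<in> pairs_to_check C R w1 w2. chP P)"
    using assms(6) unfolding find_auditable_assertions_def by blast
  show False
  proof (cases "{c1, c2} \<inter> NW C R = {}")
    case False
    then obtain c where c: "c \<in> {c1, c2}" "c \<in> NW C R" by blast
    have "chNW c \<in> NW_choices C R c" using chNW c(2) by blast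
    then obtain x1 x2 where xs: "chNW c = {AG x1 c, AG x2 c}" "x1 \<noteq> x2" "(x1, c) \<in> AG_rec C R" "(x2, c) \<in> AG_rec C R"
      unfolding NW_choices_def by blast
    have sub: "chNW c \<subseteq> A" using Adef c(2) by blast
    have h: "holds C B (AG x1 c)" "holds C B (AG x2 c)" using hA sub xs(1) by auto
    have cW: "c \<in> W" using c WP by auto
    have a1: "x1 \<noteq> c" "x1 \<in> C" "c \<in> C" "x2 \<noteq> c" "x2 \<in> C" using xs(3,4) unfolding AG_rec_def by auto
    have x1W: "x1 \<in> W" using reach_final_W[OF reachf fin valid Wd h(1) a1(1,2,3) cW] .
    have x2W: "x2 \<in> W" using reach_final_W[OF reachf fin valid Wd h(2) a1(4,5,3) cW] .
    show False using x1W x2W cW xs(2) a1(1,4) WP by auto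
  next
    case True
    define P where "P = {c1, c2}"
    have Pin: "P \<in> pairs_to_check C R w1 w2" unfolding pairs_to_check_def P_def using cc True by blast
    have "chP P \<in> pair_choices C R P" using chP Pin by blast
    then obtain oc x y where ch: "chP P = {NL oc y {x} tau23 (G_set C R y) (O_set C R oc - {x})}
        \<union> {AG oc o' | o'. o' \<in> O_set C R oc} \<union> {AG g y | g. g \<in> G_set C R y}"
      and xy: "x \<in> P" "y \<in> P" "x \<noteq> y" and oc: "oc \<in> C - P"
      unfolding pair_choices_def by blast
    have sub: "chP P \<subseteq> A" using Adef Pin by blast
    have hP: "holds C B a" if "a \<in> chP P" for a using hA sub that by blast
    have NL: "U_complex B y oc {x} tau23 (G_set C R y) < real (L_elim C B oc (O_set C R oc - {x}))"
      using hP[of "NL oc y {x} tau23 (G_set C R y) (O_set C R oc - {x})"] ch by simp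
    have agO: "\<forall>o'\<in>O_set C R oc. holds C B (AG oc o') \<and> o' \<in> C \<and> o' \<noteq> oc"
    proof
      fix o' assume o': "o' \<in> O_set C R oc"
      have "AG oc o' \<in> chP P" using ch o' by blast
      then show "holds C B (AG oc o') \<and> o' \<in> C \<and> o' \<noteq> oc" using hP o' unfolding O_set_def AG_rec_def by blast
    qed
    have agG: "\<forall>g\<in>G_set C R y. holds C B (AG g y) \<and> g \<in> C \<and> g \<noteq> y"
    proof
      fix g assume g: "g \<in> G_set C R y"
      have "AG g y \<in> chP P" using ch g by blast
      then show "holds C B (AG g y) \<and> g \<in> C \<and> g \<noteq> y" using hP g unfolding G_set_def AG_rec_def by blast
    qed
    have Wxy: "W = {x, y}" using xy WP P_def by auto
    have xyC: "x \<in> C" "y \<in> C" using xy cc P_def by auto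
    have ocs: "oc \<in> C" "oc \<noteq> x" "oc \<noteq> y" using oc xy by auto
    show False
      by (rule pair_case[OF fin valid reachf Wd Wxy xy(3) xyC ocs NL agO agG])
  qed
qed


end
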